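(* Let $T$ be an out-branching of a digraph $D$, and let $P=v_0,v_1,\ldots,v_{p-1}$ be a dipath in $T$ such that: (1) $D$ contains no arc $(v_i,v_j)$ with $i+1<j$; (2) no vertex of $P$ is a branch vertex of $T$; (3) every $v_i$ has an in-neighbor in $D$ different from $v_{i-1}$ and $v_{i+1}$. Then $D$ has an out-tree with at least $p/8$ leaves in $V(P)$.
   Context: An out-tree of a digraph $D$ is a subgraph of $D$ that is a tree (ignoring arc directions) in which exactly one vertex, the root, has in-degree $0$ and every other vertex has in-degree $1$; an out-branching is a spanning out-tree. A leaf is a vertex of out-degree $0$ in the out-tree and a branch vertex is a vertex of out-degree at least $2$ in it. A dipath is a sequence of distinct vertices with consecutive arcs $(v_i,v_{i+1})$. *)

theory Defs
  imports Main
begin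

definition digraph :: "'a set \<Rightarrow> ('a \<times> 'a) set \<Rightarrow> bool" where
  "digraph V A \<longleftrightarrow> finite V \<and> A \<subseteq> V \<times> V \<and> (\<forall>v. (v, v) \<notin> A)"

definition out_tree :: "'a set \<Rightarrow> ('a \<times> 'a) set \<Rightarrow> 'a \<Rightarrow> 'a set \<Rightarrow> ('a \<times> 'a) set \<Rightarrow> bool" where
  "out_tree V A r VT AT \<longleftrightarrow>
     VT \<subseteq> V \<and> AT \<subseteq> A \<and> AT \<subseteq> VT \<times> VT \<and> r \<in> VT \<and>
     (\<forall>u. (u, r) \<notin> AT) \<and>
     (\<forall>v \<in> VT - {r}. card {u. (u, v) \<in> AT} = 1) \<and>
     (\<forall>v \<in> VT. (r, v) \<in> AT\<^sup>*)"

definition out_branching :: "'a set \<Rightarrow> ('a \<times> 'a) set \<Rightarrow> 'a \<Rightarrow> ('a \<times> 'a) set \<Rightarrow> bool" where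
  "out_branching V A r AT \<longleftrightarrow> out_tree V A r V AT"

definition leaves :: "'a set \<Rightarrow> ('a \<times> 'a) set \<Rightarrow> 'a set" where
  "leaves VT AT = {v \<in> VT. \<forall>w. (v, w) \<notin> AT}"

definition branch_vertices :: "'a set \<Rightarrow> ('a \<times> 'a) set \<Rightarrow> 'a set" where
  "branch_vertices VT AT = {v \<in> VT. card {w. (v, w) \<in> AT} \<ge> 2}"

definition dipath :: "('a \<times> 'a) set \<Rightarrow> 'a list \<Rightarrow> bool" where
  "dipath AT P \<longleftrightarrow> distinct P \<and> (\<forall>i. i + 1 < length P \<longrightarrow> (P ! i, P ! (i + 1)) \<in> AT)"

end

theory Submission
  imports Defs
begin

fun gsel :: "nat \<Rightarrow> (nat \<Rightarrow> bool) \<Rightarrow> (nat \<Rightarrow> nat) \<Rightarrow> nat set \<Rightarrow> nat \<Rightarrow> nat set" where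
  "gsel lo kp g F 0 = {}"
| "gsel lo kp g F (Suc n) = (let S = gsel lo kp g F n; x = lo + n in
     if x \<notin> g ` {y \<in> S. kp y} \<or> (0 < n \<and> x - 1 \<notin> S) \<or> x \<in> F then insert x S else S)"

lemma gsel_sub: "gsel lo kp g F n \<subseteq> {lo..<lo+n}"
  by (induction n) (auto simp: Let_def)

lemma gsel_prefix: "m \<le> n \<Longrightarrow> gsel lo kp g F m = gsel lo kp g F n \<inter> {..<lo+m}"
proof (induction n)
  case 0 then show ?case by simp
next
  case (Suc n)
  show ?case
  proof (cases "m = Suc n")
    case True
    then show ?thesis using gsel_sub[of lo kp g F "Suc n"] by auto
  next
    case False
    then have "m \<le> n" using Suc by simp
    then have "gsel lo kp g F m = gsel lo kp g F n \<inter> {..<lo+m}" using Suc by simp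
    moreover have "gsel lo kp g F (Suc n) \<inter> {..<lo+m} = gsel lo kp g F n \<inter> {..<lo+m}"
      using \<open>m \<le> n\<close> by (auto simp: Let_def)
    ultimately show ?thesis by simp
  qed
qed

lemma gsel_char:
  assumes kg: "\<forall>y. kp y \<longrightarrow> y + 3 \<le> g y"
    and x: "lo \<le> x" "x < lo + n"
  shows "x \<in> gsel lo kp g F n \<longleftrightarrow>
    (x \<notin> g ` {y \<in> gsel lo kp g F n. kp y} \<or> (lo < x \<and> x - 1 \<notin> gsel lo kp g F n) \<or> x \<in> F)"
proof -
  define k where "k = x - lo"
  have k: "x = lo + k" "Suc k \<le> n" using x by (auto simp: k_def)
  let ?S = "gsel lo kp g F k"
  let ?X = "gsel lo kp g F n"
  have pre: "?S = ?X \<inter> {..<x}" using gsel_prefix[of k n lo kp g F] k by simp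
  have pre2: "gsel lo kp g F (Suc k) = ?X \<inter> {..<Suc x}" using gsel_prefix[of "Suc k" n lo kp g F] k by simp
  have "x \<in> ?X \<longleftrightarrow> x \<in> gsel lo kp g F (Suc k)" using pre2 by auto
  also have "\<dots> \<longleftrightarrow> (x \<notin> g ` {y \<in> ?S. kp y} \<or> (0 < k \<and> x - 1 \<notin> ?S) \<or> x \<in> F)"
  proof -
    have xS: "x \<notin> ?S" using gsel_sub[of lo kp g F k] k(1) by auto
    have "gsel lo kp g F (Suc k) = (if x \<notin> g ` {y \<in> ?S. kp y} \<or> (0 < k \<and> x - 1 \<notin> ?S) \<or> x \<in> F then insert x ?S else ?S)"
      using k(1) by (simp only: gsel.simps Let_def)
    then show ?thesis using xS by (simp split: if_splits)
  qed
  also have "(x \<in> g ` {y \<in> ?S. kp y}) \<longleftrightarrow> (x \<in> g ` {y \<in> ?X. kp y})"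
  proof
    assume "x \<in> g ` {y \<in> ?S. kp y}" then show "x \<in> g ` {y \<in> ?X. kp y}" using pre by auto
  next
    assume "x \<in> g ` {y \<in> ?X. kp y}"
    then obtain y where y: "y \<in> ?X" "kp y" "x = g y" by auto
    then have "y < x" using kg by fastforce
    then show "x \<in> g ` {y \<in> ?S. kp y}" using y pre by auto
  qed
  also have "(0 < k \<and> x - 1 \<notin> ?S) \<longleftrightarrow> (lo < x \<and> x - 1 \<notin> ?X)"
  proof -
    have "0 < k \<longleftrightarrow> lo < x" using k(1) by simp
    moreover have "x - 1 \<in> ?S \<longleftrightarrow> x - 1 \<in> ?X" if "0 < k" using pre k(1) that by auto
    ultimately show ?thesis by blast
  qed
  finally show ?thesis .
qed


lemma greedy_count:
  fixes X F G :: "nat set"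
  assumes R: "X \<subseteq> {lo..hi}" and kg: "\<forall>y. kp y \<longrightarrow> y + 3 \<le> g y"
    and ch: "\<forall>x \<in> {lo..hi}. x \<in> X \<longleftrightarrow> (x \<notin> G \<or> (lo < x \<and> x - 1 \<notin> X) \<or> x \<in> F)"
    and G: "G = g ` {y \<in> X. kp y}"
    and F: "F \<subseteq> {lo..hi}"
    and e: "e \<in> X" "\<not> (kp e \<and> g e \<le> hi)"
  shows "Suc hi - lo + 2 \<le> 3 * card (X - G) + card F"
proof -
  define S where "S = {lo..hi} - X"
  define Bad where "Bad = X \<inter> G"
  define K where "K = {y \<in> X. kp y \<and> g y \<le> hi}"
  have fX: "finite X" using R finite_subset by blast
  have c1: "card {lo..hi} = card X + card S"
  proof -
    have "card S = card {lo..hi} - card X" unfolding S_def using R fX by (simp add: card_Diff_subset)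
    moreover have "card X \<le> card {lo..hi}" using card_mono[OF finite_atLeastAtMost R] .
    ultimately show ?thesis by simp
  qed
  have c2: "card X = card (X - G) + card Bad"
  proof -
    have "X = (X - G) \<union> Bad" unfolding Bad_def by auto
    moreover have "(X - G) \<inter> Bad = {}" unfolding Bad_def by auto
    ultimately show ?thesis using fX card_Un_disjoint[of "X - G" Bad] unfolding Bad_def by simp
  qed
  have sub1: "S \<union> Bad \<subseteq> g ` K"
  proof
    fix x assume x: "x \<in> S \<union> Bad"
    then have xr: "x \<in> {lo..hi}" using R unfolding S_def Bad_def by auto
    have "x \<in> G"
    proof (cases "x \<in> S")
      case True then show ?thesis using ch xr unfolding S_def by auto
    next
      case False then show ?thesis using x unfolding Bad_def by auto
    qed
    then obtain y where y: "y \<in> X" "kp y" "x = g y" using G by auto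
    then show "x \<in> g ` K" using xr unfolding K_def by auto
  qed
  have dis: "S \<inter> Bad = {}" unfolding S_def Bad_def by auto
  have fK: "finite K" using fX unfolding K_def by auto
  have c3: "card S + card Bad \<le> card K"
  proof -
    have "card S + card Bad = card (S \<union> Bad)"
      using dis fX unfolding S_def Bad_def by (simp add: card_Un_disjoint)
    also have "\<dots> \<le> card (g ` K)" using sub1 fK by (simp add: card_mono)
    also have "\<dots> \<le> card K" using card_image_le fK by blast
    finally show ?thesis .
  qed
  have c4: "card K + 1 \<le> card X"
  proof -
    have "K \<subseteq> X - {e}" using e unfolding K_def by auto
    then have "card K \<le> card (X - {e})" using fX by (simp add: card_mono)
    also have "\<dots> = card X - 1" using e fX by simp
    moreover have "card X > 0" using e fX card_gt_0_iff by blast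
    ultimately show ?thesis by linarith
  qed
  have c5: "card Bad \<le> card S + card F"
  proof -
    have inj: "inj_on (\<lambda>x. x - 1) (Bad - F)"
    proof (rule inj_onI)
      fix x y assume "x \<in> Bad - F" "y \<in> Bad - F" "x - 1 = y - 1"
      moreover have "lo < x" "lo < y" using ch R \<open>x \<in> Bad - F\<close> \<open>y \<in> Bad - F\<close> unfolding Bad_def by auto
      ultimately show "x = y" by simp
    qed
    have im: "(\<lambda>x. x - 1) ` (Bad - F) \<subseteq> S"
    proof
      fix z assume "z \<in> (\<lambda>x. x - 1) ` (Bad - F)"
      then obtain x where x: "x \<in> Bad - F" "z = x - 1" by auto
      have xr: "x \<in> {lo..hi}" using x R unfolding Bad_def by auto
      have "lo < x \<and> x - 1 \<notin> X" using ch xr x unfolding Bad_def by auto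
      then show "z \<in> S" using x xr unfolding S_def by auto
    qed
    have fS: "finite S" unfolding S_def by auto
    have "card (Bad - F) \<le> card S"
      using card_inj_on_le[OF inj im fS] .
    moreover have "card Bad \<le> card (Bad - F) + card F"
    proof -
      have "Bad \<subseteq> (Bad - F) \<union> F" by auto
      then have "card Bad \<le> card ((Bad - F) \<union> F)" using fX F unfolding Bad_def
        by (intro card_mono) (auto intro: finite_subset)
      also have "\<dots> \<le> card (Bad - F) + card F" by (rule card_Un_le)
      finally show ?thesis .
    qed
    ultimately show ?thesis by simp
  qed
  have "card {lo..hi} = Suc hi - lo" by simp
  then show ?thesis using c1 c2 c3 c4 c5 by linarith
qed



lemma greedy_exists:
  fixes lo hi :: nat and F :: "nat set"
  assumes kg: "\<forall>y. kp y \<longrightarrow> y + 3 \<le> g y" and lh: "lo \<le> hi" and F: "F \<subseteq> {lo..hi}"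
  shows "\<exists>X. X \<subseteq> {lo..hi} \<and> lo \<in> X \<and> F \<subseteq> X \<and>
    (\<forall>x \<in> {lo..hi}. x \<in> X \<longleftrightarrow> (x \<notin> g ` {y \<in> X. kp y} \<or> (lo < x \<and> x - 1 \<notin> X) \<or> x \<in> F))"
proof -
  define X where "X = gsel lo kp g F (Suc hi - lo)"
  have sub: "X \<subseteq> {lo..hi}" using gsel_sub[of lo kp g F "Suc hi - lo"] lh unfolding X_def by auto
  have ch: "\<forall>x \<in> {lo..hi}. x \<in> X \<longleftrightarrow> (x \<notin> g ` {y \<in> X. kp y} \<or> (lo < x \<and> x - 1 \<notin> X) \<or> x \<in> F)"
  proof
    fix x assume "x \<in> {lo..hi}"
    then have "lo \<le> x" "x < lo + (Suc hi - lo)" by auto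
    then show "x \<in> X \<longleftrightarrow> (x \<notin> g ` {y \<in> X. kp y} \<or> (lo < x \<and> x - 1 \<notin> X) \<or> x \<in> F)"
      unfolding X_def by (rule gsel_char[OF kg])
  qed
  have "lo \<notin> g ` {y \<in> X. kp y}"
  proof
    assume "lo \<in> g ` {y \<in> X. kp y}"
    then obtain y where "y \<in> X" "kp y" "lo = g y" by auto
    then show False using kg sub by fastforce
  qed
  moreover have "lo \<in> {lo..hi}" using lh by simp
  ultimately have "lo \<in> X" using ch[rule_format, of lo] by blast
  moreover have "F \<subseteq> X"
  proof
    fix x assume x: "x \<in> F"
    then have "x \<in> {lo..hi}" using F by blast
    then show "x \<in> X" using ch[rule_format, of x] x by blast
  qed
  ultimately show ?thesis using sub ch by blast
qed

lemma greedy_next: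
  fixes lo hi y z :: nat and X G F :: "nat set"
  assumes sub: "X \<subseteq> {lo..hi}"
    and ch: "\<forall>x \<in> {lo..hi}. x \<in> X \<longleftrightarrow> (x \<notin> G \<or> (lo < x \<and> x - 1 \<notin> X) \<or> x \<in> F)"
    and y: "y \<in> X" and z: "z \<in> X" "y < z"
  shows "\<exists>z' \<in> X. y < z' \<and> z' \<le> y + 2"
proof (rule ccontr)
  assume "\<not> ?thesis"
  then have n: "y + 1 \<notin> X" "y + 2 \<notin> X" by force+
  have "z \<noteq> y + 1" "z \<noteq> y + 2" using n z by auto
  then have "y + 2 < z" using z by simp
  then have r: "y + 2 \<in> {lo..hi}" using sub y z by auto
  have "lo < y + 2" using sub y by auto
  then have "y + 2 - 1 \<in> X" using ch[rule_format, OF r] n(2) by blast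
  then show False using n(1) by simp
qed

lemma greedy_top:
  fixes lo hi :: nat and X G F :: "nat set"
  assumes sub: "X \<subseteq> {lo..hi}" and lo: "lo \<in> X"
    and ch: "\<forall>x \<in> {lo..hi}. x \<in> X \<longleftrightarrow> (x \<notin> G \<or> (lo < x \<and> x - 1 \<notin> X) \<or> x \<in> F)"
  shows "hi \<le> Max X + 1"
proof -
  have fX: "finite X" using sub finite_subset by blast
  have lh: "lo \<le> hi" using sub lo by (meson atLeastAtMost_iff subsetD)
  show ?thesis
  proof (cases "hi \<in> X")
    case True then show ?thesis using Max_ge[OF fX True] by simp
  next
    case False
    then have "lo < hi" using lo lh by (cases "lo = hi") auto
    moreover have "hi \<in> {lo..hi}" using lh by simp
    ultimately have h1: "hi - 1 \<in> X" using ch[rule_format, of hi] False by blast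
    show ?thesis using Max_ge[OF fX h1] by simp
  qed
qed


lemma rank_out_tree:
  fixes mu :: "'a \<Rightarrow> nat"
  assumes "VT \<subseteq> V" "AR \<subseteq> A" "AR \<subseteq> VT \<times> VT" "\<rho> \<in> VT" "\<forall>a. (a, \<rho>) \<notin> AR"
    and cd: "\<forall>c \<in> VT - {\<rho>}. card {a. (a, c) \<in> AR} = 1"
    and mu: "\<forall>a c. (a, c) \<in> AR \<longrightarrow> mu a < mu c"
  shows "out_tree V A \<rho> VT AR"
proof -
  have "\<forall>c. mu c = n \<longrightarrow> c \<in> VT \<longrightarrow> (\<rho>, c) \<in> AR\<^sup>*" for n
  proof (induction n rule: less_induct)
    case (less n)
    show ?case
    proof (intro allI impI)
      fix c assume c: "mu c = n" "c \<in> VT"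
      show "(\<rho>, c) \<in> AR\<^sup>*"
      proof (cases "c = \<rho>")
        case True then show ?thesis by simp
      next
        case False
        then have "card {a. (a, c) \<in> AR} = 1" using cd c by blast
        then obtain a where "{a. (a, c) \<in> AR} = {a}" by (rule card_1_singletonE)
        then have a: "(a, c) \<in> AR" by blast
        then have "a \<in> VT" "mu a < n" using assms(3) mu c by auto
        then have "(\<rho>, a) \<in> AR\<^sup>*" using less by blast
        then show ?thesis using a by (rule rtrancl_into_rtrancl)
      qed
    qed
  qed
  then show ?thesis using assms unfolding out_tree_def by blast
qed

locale L2 =
  fixes V :: "'a set" and A :: "('a \<times> 'a) set" and r :: 'a
    and AT :: "('a \<times> 'a) set" and P :: "'a list"
  assumes D: "digraph V A"
    and T: "out_branching V A r AT"
    and path: "dipath AT P"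
    and nla: "\<forall>i j. i + 1 < j \<and> j < length P \<longrightarrow> (P ! i, P ! j) \<notin> A"
    and nb: "\<forall>v \<in> set P. v \<notin> branch_vertices V AT"
    and inn: "\<forall>i < length P. \<exists>u. (u, P ! i) \<in> A
                    \<and> (i > 0 \<longrightarrow> u \<noteq> P ! (i - 1))
                    \<and> (i + 1 < length P \<longrightarrow> u \<noteq> P ! (i + 1))"
    and pne: "0 < length P"
begin

abbreviation "p \<equiv> length P"

lemma AT_A: "AT \<subseteq> A" and AT_V: "AT \<subseteq> V \<times> V" and rV: "r \<in> V"
  and noin_r: "\<And>u. (u, r) \<notin> AT" and indeg: "\<And>v. v \<in> V \<Longrightarrow> v \<noteq> r \<Longrightarrow> card {u. (u, v) \<in> AT} = 1"
  and reach: "\<And>v. v \<in> V \<Longrightarrow> (r, v) \<in> AT\<^sup>*"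
  using T unfolding out_branching_def out_tree_def by auto

lemma finV: "finite V" and A_V: "A \<subseteq> V \<times> V" and noloop: "\<And>v. (v, v) \<notin> A"
  using D unfolding digraph_def by auto

lemma arcV: "(a, c) \<in> AT \<Longrightarrow> a \<in> V \<and> c \<in> V" using AT_V by auto

lemma par_unique: assumes "(a, c) \<in> AT" "(b, c) \<in> AT" shows "a = b"
proof -
  have c: "c \<in> V" "c \<noteq> r" using assms(1) arcV noin_r by auto
  then have "card {u. (u, c) \<in> AT} = 1" by (rule indeg)
  then obtain x where eq: "{u. (u, c) \<in> AT} = {x}" by (rule card_1_singletonE)
  have "a \<in> {u. (u, c) \<in> AT}" "b \<in> {u. (u, c) \<in> AT}" using assms by simp_all
  then show ?thesis unfolding eq by simp
qed

lemma has_par: assumes "c \<in> V" "c \<noteq> r" shows "\<exists>a. (a, c) \<in> AT"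
proof -
  have "card {u. (u, c) \<in> AT} = 1" using assms by (rule indeg)
  then obtain x where "{u. (u, c) \<in> AT} = {x}" by (rule card_1_singletonE)
  then show ?thesis by auto
qed

lemma acyc_aux: "(r, v) \<in> AT\<^sup>* \<Longrightarrow> (v, v) \<notin> AT\<^sup>+"
proof (induction rule: rtrancl_induct)
  case base
  show ?case
  proof
    assume "(r, r) \<in> AT\<^sup>+"
    then obtain z where "(z, r) \<in> AT" by (meson tranclE)
    then show False using noin_r by simp
  qed
next
  case (step y z)
  show ?case
  proof
    assume "(z, z) \<in> AT\<^sup>+"
    then obtain w where w: "(z, w) \<in> AT\<^sup>*" "(w, z) \<in> AT" using tranclD2 by fastforce
    then have "w = y" using par_unique step(2) by blast
    then have "(y, y) \<in> AT\<^sup>+" using step(2) w(1) by (meson rtrancl_into_trancl2)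
    then show False using step(3) by simp
  qed
qed

lemma acyc: "(x, x) \<notin> AT\<^sup>+"
proof
  assume h: "(x, x) \<in> AT\<^sup>+"
  then obtain z where "(x, z) \<in> AT" by (meson tranclE trancl_into_rtrancl converse_tranclE)
  then have "x \<in> V" using arcV by auto
  then show False using acyc_aux[OF reach] h by blast
qed

lemma arc_not_back: "(a, c) \<in> AT \<Longrightarrow> (c, a) \<notin> AT\<^sup>*"
  using acyc by (meson rtrancl_into_trancl1)

definition desc :: "'a \<Rightarrow> 'a set" where "desc x = {y. (x, y) \<in> AT\<^sup>*}"

lemma desc_par: assumes "c \<in> desc w" "c \<noteq> w" "(a, c) \<in> AT" shows "a \<in> desc w"
proof -
  have "(w, c) \<in> AT\<^sup>*" using assms(1) unfolding desc_def by simp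
  then have "\<exists>a'. (w, a') \<in> AT\<^sup>* \<and> (a', c) \<in> AT" using assms(2) by (cases rule: rtranclE) auto
  then obtain a' where "(w, a') \<in> AT\<^sup>*" "(a', c) \<in> AT" by blast
  then show ?thesis using par_unique assms(3) unfolding desc_def by blast
qed

lemma desc_V: "x \<in> V \<Longrightarrow> desc x \<subseteq> V"
proof
  fix y assume "x \<in> V" "y \<in> desc x"
  then have "(x, y) \<in> AT\<^sup>*" unfolding desc_def by simp
  then show "y \<in> V" using \<open>x \<in> V\<close> by (induction rule: rtrancl_induct) (auto dest: arcV)
qed

definition dep :: "'a \<Rightarrow> nat" where "dep v = card {a. (a, v) \<in> AT\<^sup>*}"

lemma anc_V: "v \<in> V \<Longrightarrow> {a. (a, v) \<in> AT\<^sup>*} \<subseteq> V"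
proof
  fix a assume "v \<in> V" "a \<in> {a. (a, v) \<in> AT\<^sup>*}"
  then have "(a, v) \<in> AT\<^sup>*" by simp
  then show "a \<in> V" using \<open>v \<in> V\<close> by (induction rule: converse_rtrancl_induct) (auto dest: arcV)
qed

lemma dep_le: "v \<in> V \<Longrightarrow> dep v \<le> card V"
  unfolding dep_def using anc_V finV by (simp add: card_mono)

lemma dep_less: assumes "(a, c) \<in> AT" shows "dep a < dep c"
proof -
  have c: "c \<in> V" using assms arcV by auto
  have "{x. (x, a) \<in> AT\<^sup>*} \<subset> {x. (x, c) \<in> AT\<^sup>*}"
  proof
    show "{x. (x, a) \<in> AT\<^sup>*} \<subseteq> {x. (x, c) \<in> AT\<^sup>*}" using assms by auto
    show "{x. (x, a) \<in> AT\<^sup>*} \<noteq> {x. (x, c) \<in> AT\<^sup>*}"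
      using arc_not_back[OF assms] by auto
  qed
  moreover have "finite {x. (x, c) \<in> AT\<^sup>*}" using anc_V[OF c] finV finite_subset by blast
  ultimately show ?thesis unfolding dep_def by (simp add: psubset_card_mono)
qed

lemma distP: "distinct P" and parc: "Suc i < p \<Longrightarrow> (P ! i, P ! Suc i) \<in> AT"
  using path unfolding dipath_def by auto

lemma nth_inj: "i < p \<Longrightarrow> j < p \<Longrightarrow> P ! i = P ! j \<Longrightarrow> i = j"
  using distP by (simp add: nth_eq_iff_index_eq)

definition U :: "nat \<Rightarrow> 'a" where
  "U i = (SOME u. (u, P ! i) \<in> A \<and> (i > 0 \<longrightarrow> u \<noteq> P ! (i - 1)) \<and> (i + 1 < p \<longrightarrow> u \<noteq> P ! (i + 1)))"

lemma U_prop: assumes "i < p"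
  shows "(U i, P ! i) \<in> A" "i > 0 \<Longrightarrow> U i \<noteq> P ! (i - 1)" "i + 1 < p \<Longrightarrow> U i \<noteq> P ! (i + 1)"
proof -
  have "\<exists>u. (u, P ! i) \<in> A \<and> (i > 0 \<longrightarrow> u \<noteq> P ! (i - 1)) \<and> (i + 1 < p \<longrightarrow> u \<noteq> P ! (i + 1))"
    using inn assms by blast
  then have "(U i, P ! i) \<in> A \<and> (i > 0 \<longrightarrow> U i \<noteq> P ! (i - 1)) \<and> (i + 1 < p \<longrightarrow> U i \<noteq> P ! (i + 1))"
    unfolding U_def by (rule someI_ex)
  then show "(U i, P ! i) \<in> A" "i > 0 \<Longrightarrow> U i \<noteq> P ! (i - 1)" "i + 1 < p \<Longrightarrow> U i \<noteq> P ! (i + 1)" by auto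
qed

lemma pV: "i < p \<Longrightarrow> P ! i \<in> V" using U_prop(1) A_V by blast

lemma UV: "i < p \<Longrightarrow> U i \<in> V" using U_prop(1) A_V by blast

lemma U_P: assumes "i < p" "U i \<in> set P" shows "\<exists>j. U i = P ! j \<and> i + 2 \<le> j \<and> j < p"
proof -
  obtain j where j: "j < p" "U i = P ! j" using assms(2) by (auto simp: in_set_conv_nth)
  have "j \<noteq> i" using noloop U_prop(1)[OF assms(1)] j by auto
  moreover have "j \<noteq> i + 1" using U_prop(3)[OF assms(1)] j by auto
  moreover have "\<not> j < i"
  proof
    assume "j < i"
    moreover have "j \<noteq> i - 1" using U_prop(2)[OF assms(1)] j \<open>j < i\<close> by auto
    ultimately have "j + 1 < i" by simp
    then have "(P ! j, P ! i) \<notin> A" using nla assms(1) by blast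
    then show False using U_prop(1)[OF assms(1)] j by simp
  qed
  ultimately show ?thesis using j by auto
qed

lemma ppath: "i \<le> j \<Longrightarrow> j < p \<Longrightarrow> (P ! i, P ! j) \<in> AT\<^sup>*"
proof (induction j)
  case 0 then show ?case by simp
next
  case (Suc j)
  show ?case
  proof (cases "i = Suc j")
    case True then show ?thesis by simp
  next
    case False
    then have "(P ! i, P ! j) \<in> AT\<^sup>*" using Suc by simp
    then show ?thesis using parc[of j] Suc.prems by (meson rtrancl.rtrancl_into_rtrancl)
  qed
qed

lemma pchild: assumes "Suc i < p" "(P ! i, w) \<in> AT" shows "w = P ! Suc i"
proof (rule ccontr)
  assume ne: "w \<noteq> P ! Suc i"
  have v: "P ! i \<in> V" "P ! i \<in> set P" using assms(1) pV by auto
  then have "P ! i \<notin> branch_vertices V AT" using nb by blast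
  then have c: "card {x. (P ! i, x) \<in> AT} < 2" using v unfolding branch_vertices_def by auto
  have "{w, P ! Suc i} \<subseteq> {x. (P ! i, x) \<in> AT}" using assms parc by auto
  moreover have "finite {x. (P ! i, x) \<in> AT}" using finV AT_V finite_subset[of "{x. (P ! i, x) \<in> AT}" V] by auto
  ultimately have "card {w, P ! Suc i} \<le> card {x. (P ! i, x) \<in> AT}" by (rule card_mono[rotated])
  then show False using ne c by simp
qed

lemma ppar: assumes "0 < i" "i < p" "(a, P ! i) \<in> AT" shows "a = P ! (i - 1)"
  using par_unique[OF assms(3)] parc[of "i - 1"] assms by simp

abbreviation "W \<equiv> desc (P ! 0)"
abbreviation "Dd \<equiv> desc (P ! (p - 1))"

lemma PW: "i < p \<Longrightarrow> P ! i \<in> W" unfolding desc_def using ppath by simp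

lemma DdW: "Dd \<subseteq> W"
  unfolding desc_def using ppath[of 0 "p - 1"] pne by (auto intro: rtrancl_trans)

lemma W_cases: "c \<in> W \<Longrightarrow> c \<in> set P \<or> c \<in> Dd"
proof -
  assume "c \<in> W"
  then have "(P ! 0, c) \<in> AT\<^sup>*" unfolding desc_def by simp
  then show ?thesis
  proof (induction rule: rtrancl_induct)
    case base then show ?case using pne by simp
  next
    case (step y z)
    from step(3) show ?case
    proof
      assume "y \<in> set P"
      then obtain i where i: "i < p" "y = P ! i" by (auto simp: in_set_conv_nth)
      show ?thesis
      proof (cases "Suc i < p")
        case True
        then have "z = P ! Suc i" using pchild step(2) i by blast
        then show ?thesis using True by simp
      next
        case False
        then have "i = p - 1" using i by simp
        then show ?thesis using step(2) i unfolding desc_def by auto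
      qed
    next
      assume "y \<in> Dd"
      then have "(P ! (p - 1), z) \<in> AT\<^sup>*" using step(2) unfolding desc_def by (auto intro: rtrancl_into_rtrancl)
      then show ?thesis unfolding desc_def by simp
    qed
  qed
qed

lemma Dd_P: assumes "i < p" "P ! i \<in> Dd" shows "i = p - 1"
proof (rule ccontr)
  assume "i \<noteq> p - 1"
  then have "Suc i < p" using assms by simp
  then have "(P ! i, P ! Suc i) \<in> AT" by (rule parc)
  moreover have "(P ! Suc i, P ! i) \<in> AT\<^sup>*"
  proof -
    have "(P ! Suc i, P ! (p - 1)) \<in> AT\<^sup>*" using ppath[of "Suc i" "p - 1"] \<open>Suc i < p\<close> by simp
    moreover have "(P ! (p - 1), P ! i) \<in> AT\<^sup>*" using assms(2) unfolding desc_def by simp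
    ultimately show ?thesis by (rule rtrancl_trans)
  qed
  ultimately show False using arc_not_back by blast
qed

lemma W_closed: "a \<in> W \<Longrightarrow> (a, c) \<in> AT \<Longrightarrow> c \<in> W"
  unfolding desc_def by (auto intro: rtrancl_into_rtrancl)

definition idx :: "'a \<Rightarrow> nat" where
  "idx v = (if v \<in> set P then (THE i. i < p \<and> P ! i = v) else p - 1)"

lemma idx_nth: "i < p \<Longrightarrow> idx (P ! i) = i"
  unfolding idx_def using nth_inj by (auto intro!: the_equality)

lemma idx_lt: "idx v < p"
proof (cases "v \<in> set P")
  case True
  then obtain i where "i < p" "v = P ! i" by (auto simp: in_set_conv_nth)
  then show ?thesis using idx_nth by simp
next
  case False then show ?thesis unfolding idx_def using pne by simp
qed

definition kp :: "nat \<Rightarrow> bool" where "kp y \<longleftrightarrow> y < p \<and> U y \<in> set P"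
definition gg :: "nat \<Rightarrow> nat" where "gg y = Suc (idx (U y))"

lemma kg: "\<forall>y. kp y \<longrightarrow> y + 3 \<le> gg y"
proof (intro allI impI)
  fix y assume "kp y"
  then obtain j where "U y = P ! j" "y + 2 \<le> j" "j < p" using U_P unfolding kp_def by blast
  then show "y + 3 \<le> gg y" unfolding gg_def using idx_nth by simp
qed


definition sX :: "nat set \<Rightarrow> 'a \<Rightarrow> nat" where "sX X v = Max (insert 0 {x \<in> X. x \<le> idx v})"
definition key :: "nat set \<Rightarrow> 'a \<Rightarrow> nat" where "key X v = (if v \<in> W then Suc (p - sX X v) else 0)"
definition mu :: "nat set \<Rightarrow> 'a \<Rightarrow> nat" where "mu X v = key X v * Suc (card V) + dep v"

lemma sX_le: "finite X \<Longrightarrow> sX X v \<le> idx v"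
  unfolding sX_def by (subst Max_le_iff) auto

lemma sX_ge: "finite X \<Longrightarrow> z \<in> X \<Longrightarrow> z \<le> idx v \<Longrightarrow> z \<le> sX X v"
  unfolding sX_def by (rule Max_ge) auto

lemma sX_nth: "finite X \<Longrightarrow> y \<in> X \<Longrightarrow> y < p \<Longrightarrow> sX X (P ! y) = y"
  using sX_le[of X "P ! y"] sX_ge[of X y "P ! y"] idx_nth by simp

lemma sX_mono: assumes "finite X" "{x \<in> X. x \<le> idx c} \<subseteq> {x \<in> X. x \<le> idx a}" shows "sX X c \<le> sX X a"
  unfolding sX_def using assms by (intro Max_mono) auto

lemma KA: assumes fX: "finite X" and arc: "(a, c) \<in> AT" and nc: "c \<notin> (\<lambda>x. P ! x) ` X"
  shows "mu X a < mu X c"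
proof -
  have d: "dep a < dep c" using arc by (rule dep_less)
  have "key X a \<le> key X c"
  proof (cases "a \<in> W")
    case False then show ?thesis unfolding key_def by simp
  next
    case aW: True
    then have cW: "c \<in> W" using W_closed arc by blast
    have sub: "{x \<in> X. x \<le> idx c} \<subseteq> {x \<in> X. x \<le> idx a}"
    proof (cases "c \<in> set P")
      case True
      then obtain i where i: "i < p" "c = P ! i" by (auto simp: in_set_conv_nth)
      have "i \<noteq> 0"
      proof
        assume "i = 0"
        then have "(c, a) \<in> AT\<^sup>*" using aW i unfolding desc_def by simp
        then show False using arc_not_back arc by blast
      qed
      then have "a = P ! (i - 1)" using ppar i arc by simp
      then have "idx a = i - 1" "idx c = i" using idx_nth i by auto
      moreover have "i \<notin> X" using nc i by auto
      ultimately show ?thesis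
      proof (intro subsetI)
        fix x assume h: "idx a = i - 1" "idx c = i" "i \<notin> X" "x \<in> {x \<in> X. x \<le> idx c}"
        then have "x \<noteq> i" "x \<le> i" "x \<in> X" by auto
        then show "x \<in> {x \<in> X. x \<le> idx a}" using h(1) by simp
      qed
    next
      case False
      then have ic: "idx c = p - 1" unfolding idx_def by simp
      have "idx a = p - 1"
      proof (cases "a \<in> set P")
        case True
        then obtain j where j: "j < p" "a = P ! j" by (auto simp: in_set_conv_nth)
        have "\<not> Suc j < p"
        proof
          assume "Suc j < p"
          then have "c = P ! Suc j" using pchild arc j by blast
          then show False using False \<open>Suc j < p\<close> by simp
        qed
        then show ?thesis using j idx_nth by simp
      next
        case False then show ?thesis unfolding idx_def by simp
      qed
      then show ?thesis using ic by auto
    qed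
    have "sX X c \<le> sX X a" using sX_mono[OF fX sub] .
    then show ?thesis unfolding key_def using aW cW by simp
  qed
  then have "key X a * Suc (card V) \<le> key X c * Suc (card V)" by (rule mult_right_mono) simp
  then show ?thesis unfolding mu_def using d by simp
qed

lemma KU: assumes fX: "finite X" and Xp: "X \<subseteq> {..<p}" and y: "y \<in> X"
    and nxt: "U y \<notin> W \<or> (\<exists>z \<in> X. y < z \<and> z \<le> y + 2)"
  shows "mu X (U y) < mu X (P ! y)"
proof -
  have yp: "y < p" using y Xp by auto
  have kP: "key X (P ! y) = Suc (p - y)" unfolding key_def using PW[OF yp] sX_nth[OF fX y yp] by simp
  have "key X (U y) < key X (P ! y)"
  proof (cases "U y \<in> W")
    case False then show ?thesis unfolding key_def using PW[OF yp] by simp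
  next
    case True
    then obtain z where z: "z \<in> X" "y < z" "z \<le> y + 2" using nxt by blast
    have "z \<le> idx (U y)"
    proof (cases "U y \<in> set P")
      case True
      then obtain j where "U y = P ! j" "y + 2 \<le> j" "j < p" using U_P yp by blast
      then show ?thesis using idx_nth z by simp
    next
      case False
      then show ?thesis unfolding idx_def using z Xp by auto
    qed
    then have "z \<le> sX X (U y)" using sX_ge fX z by blast
    moreover have "sX X (U y) < p" using sX_le[OF fX] idx_lt le_less_trans by blast
    ultimately show ?thesis unfolding kP unfolding key_def using True z by simp
  qed
  then have "(key X (U y) + 1) * Suc (card V) \<le> key X (P ! y) * Suc (card V)" by (intro mult_right_mono) auto
  moreover have "dep (U y) \<le> card V" using dep_le UV yp by blast
  ultimately show ?thesis unfolding mu_def by simp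
qed

definition ARa :: "nat set \<Rightarrow> ('a \<times> 'a) set" where
  "ARa X = {(a, c). (a, c) \<in> AT \<and> c \<notin> (\<lambda>x. P ! x) ` X} \<union> (\<lambda>y. (U y, P ! y)) ` X"

lemma in_image_nth: assumes "X \<subseteq> {..<p}" "y \<in> X" shows "{a. (a, P ! y) \<in> (\<lambda>y. (U y, P ! y)) ` X} = {U y}"
proof -
  have "a = U y" if h: "(a, P ! y) \<in> (\<lambda>y. (U y, P ! y)) ` X" for a
  proof -
    obtain y' where y': "y' \<in> X" "(a, P ! y) = (U y', P ! y')" using h by (rule imageE)
    then have "y' \<in> X" "a = U y'" "P ! y = P ! y'" by auto
    moreover have "y = y'" using nth_inj assms calculation by blast
    ultimately show ?thesis by simp
  qed
  then show ?thesis using assms by auto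
qed

lemma alpha_tree: assumes fX: "finite X" and Xs: "X \<subseteq> {1..<p}"
    and nxt: "\<forall>y \<in> X. U y \<notin> W \<or> (\<exists>z \<in> X. y < z \<and> z \<le> y + 2)"
  shows "out_tree V A r V (ARa X)"
proof (rule rank_out_tree[where mu = "mu X"])
  have Xp: "X \<subseteq> {..<p}" using Xs by auto
  show "V \<subseteq> V" by simp
  show "ARa X \<subseteq> A" unfolding ARa_def using AT_A U_prop(1) Xp by auto
  show "ARa X \<subseteq> V \<times> V" unfolding ARa_def using AT_V UV pV Xp by auto
  show "r \<in> V" by (rule rV)
  show "\<forall>a. (a, r) \<notin> ARa X"
  proof (intro allI notI)
    fix a assume "(a, r) \<in> ARa X"
    then consider "(a, r) \<in> AT" | y where "y \<in> X" "r = P ! y" unfolding ARa_def by auto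
    then show False
    proof cases
      case 1 then show ?thesis using noin_r by simp
    next
      case 2
      then have "Suc (y - 1) < p" "Suc (y - 1) = y" using Xs by auto
      then have "(P ! (y - 1), P ! y) \<in> AT" using parc[of "y - 1"] by simp
      then show ?thesis using 2 noin_r by simp
    qed
  qed
  show "\<forall>c \<in> V - {r}. card {a. (a, c) \<in> ARa X} = 1"
  proof
    fix c assume c: "c \<in> V - {r}"
    show "card {a. (a, c) \<in> ARa X} = 1"
    proof (cases "c \<in> (\<lambda>x. P ! x) ` X")
      case True
      then obtain y where y: "y \<in> X" "c = P ! y" by auto
      have "{a. (a, c) \<in> ARa X} = {a. (a, P ! y) \<in> (\<lambda>y. (U y, P ! y)) ` X}"
        unfolding ARa_def using True y by auto
      then show ?thesis using in_image_nth[OF Xp y(1)] by simp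
    next
      case False
      then have "{a. (a, c) \<in> ARa X} = {a. (a, c) \<in> AT}" unfolding ARa_def by auto
      then show ?thesis using indeg c by simp
    qed
  qed
  show "\<forall>a c. (a, c) \<in> ARa X \<longrightarrow> mu X a < mu X c"
  proof (intro allI impI)
    fix a c assume "(a, c) \<in> ARa X"
    then consider "(a, c) \<in> AT" "c \<notin> (\<lambda>x. P ! x) ` X" | y where "y \<in> X" "a = U y" "c = P ! y"
      unfolding ARa_def by auto
    then show "mu X a < mu X c"
    proof cases
      case 1 then show ?thesis using KA[OF fX] by simp
    next
      case 2
      have n2: "U y \<notin> W \<or> (\<exists>z \<in> X. y < z \<and> z \<le> y + 2)" using nxt 2(1) by blast
      have "mu X (U y) < mu X (P ! y)" by (rule KU[OF fX Xp 2(1) n2])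
      then show ?thesis using 2(2,3) by simp
    qed
  qed
qed

lemma no_kill: assumes "y < p" "P ! (x - 1) = U y" "x - 1 < p" "0 < x"
  shows "kp y \<and> gg y = x"
proof -
  have e: "U y = P ! (x - 1)" using assms(2) by simp
  have "U y \<in> set P" unfolding e using assms(3) by simp
  moreover have "gg y = x" unfolding gg_def e using idx_nth[OF assms(3)] assms(4) by simp
  ultimately show ?thesis unfolding kp_def using assms(1) by simp
qed

lemma alpha_leaf: assumes fX: "finite X" and Xs: "X \<subseteq> {1..<p}" and x: "x \<in> X"
    and nk: "x \<notin> gg ` {y \<in> X. kp y}"
  shows "P ! (x - 1) \<in> leaves V (ARa X)"
proof -
  have x1: "1 \<le> x" "x < p" using x Xs by auto
  have "(P ! (x - 1), w) \<notin> ARa X" for w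
  proof
    assume "(P ! (x - 1), w) \<in> ARa X"
    then consider "(P ! (x - 1), w) \<in> AT" "w \<notin> (\<lambda>x. P ! x) ` X" | y where "y \<in> X" "P ! (x - 1) = U y"
      unfolding ARa_def by auto
    then show False
    proof cases
      case 1
      have "Suc (x - 1) < p" "Suc (x - 1) = x" using x1 by auto
      then have "w = P ! x" using pchild[of "x - 1" w] 1(1) by simp
      then show False using 1(2) x by auto
    next
      case 2
      then have "kp y \<and> gg y = x" using no_kill[of y x] Xs x1 by auto
      then show False using nk 2 by auto
    qed
  qed
  then show ?thesis unfolding leaves_def using pV x1 by auto
qed

definition ARb :: "nat \<Rightarrow> nat set \<Rightarrow> ('a \<times> 'a) set" where
  "ARb lo X = {(a, c). (a, c) \<in> AT \<and> a \<in> desc (P ! lo) \<and> c \<in> desc (P ! lo) \<and> c \<notin> (\<lambda>x. P ! x) ` X}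
     \<union> (\<lambda>y. (U y, P ! y)) ` (X - {Max X})"

lemma beta_tree: assumes fX: "finite X" and Xs: "X \<subseteq> {lo..<p}" and lo: "lo \<in> X"
    and UW: "\<forall>y \<in> X. U y \<in> W"
    and nxt: "\<forall>y \<in> X - {Max X}. \<exists>z \<in> X. y < z \<and> z \<le> y + 2"
  shows "out_tree V A (P ! Max X) (desc (P ! lo)) (ARb lo X)"
proof (rule rank_out_tree[where mu = "mu X"])
  have Xp: "X \<subseteq> {..<p}" using Xs by auto
  have lop: "lo < p" using lo Xs by auto
  have mX: "Max X \<in> X" using fX lo Max_in by blast
  have inD: "P ! i \<in> desc (P ! lo)" if "lo \<le> i" "i < p" for i
    using ppath that unfolding desc_def by simp
  have DdD: "Dd \<subseteq> desc (P ! lo)"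
  proof
    fix x assume "x \<in> Dd"
    then have "(P ! (p - 1), x) \<in> AT\<^sup>*" unfolding desc_def by simp
    moreover have "(P ! lo, P ! (p - 1)) \<in> AT\<^sup>*" using ppath lop by simp
    ultimately show "x \<in> desc (P ! lo)" unfolding desc_def by (simp add: rtrancl_trans)
  qed
  have UD: "U y \<in> desc (P ! lo)" if yX: "y \<in> X" for y
  proof -
    have "U y \<in> W" using UW yX by blast
    then consider "U y \<in> set P" | "U y \<in> Dd" using W_cases by blast
    then show ?thesis
    proof cases
      case 1
      then obtain j where "U y = P ! j" "y + 2 \<le> j" "j < p" using U_P yX Xp by blast
      then show ?thesis using inD yX Xs by auto
    next
      case 2 then show ?thesis using DdD by blast
    qed
  qed
  show "desc (P ! lo) \<subseteq> V" using desc_V pV lop by blast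
  show "ARb lo X \<subseteq> A" unfolding ARb_def using AT_A U_prop(1) Xp by auto
  show "ARb lo X \<subseteq> desc (P ! lo) \<times> desc (P ! lo)"
  proof
    fix e assume "e \<in> ARb lo X"
    then consider "e \<in> AT" "fst e \<in> desc (P ! lo)" "snd e \<in> desc (P ! lo)" | y where "y \<in> X" "e = (U y, P ! y)"
      unfolding ARb_def by auto
    then show "e \<in> desc (P ! lo) \<times> desc (P ! lo)"
    proof cases
      case 1 then show ?thesis by (cases e) simp
    next
      case 2
      have "lo \<le> y" "y < p" using 2(1) Xs by auto
      then have "P ! y \<in> desc (P ! lo)" by (rule inD)
      then show ?thesis using UD[OF 2(1)] 2(2) by simp
    qed
  qed
  show "P ! Max X \<in> desc (P ! lo)" using inD mX Xs by auto
  show "\<forall>a. (a, P ! Max X) \<notin> ARb lo X"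
  proof (intro allI notI)
    fix a assume "(a, P ! Max X) \<in> ARb lo X"
    then consider "P ! Max X \<notin> (\<lambda>x. P ! x) ` X" | y where "y \<in> X" "y \<noteq> Max X" "P ! Max X = P ! y"
      unfolding ARb_def by auto
    then show False
    proof cases
      case 1 then show ?thesis using mX by auto
    next
      case 2
      have "Max X < p" "y < p" using Xp mX 2(1) by auto
      then show ?thesis using nth_inj[of "Max X" y] 2 by simp
    qed
  qed
  show "\<forall>c \<in> desc (P ! lo) - {P ! Max X}. card {a. (a, c) \<in> ARb lo X} = 1"
  proof
    fix c assume c: "c \<in> desc (P ! lo) - {P ! Max X}"
    show "card {a. (a, c) \<in> ARb lo X} = 1"
    proof (cases "c \<in> (\<lambda>x. P ! x) ` X")
      case True
      then obtain y where y: "y \<in> X" "c = P ! y" by auto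
      then have yM: "y \<noteq> Max X" using c by auto
      have e1: "{a. (a, c) \<in> ARb lo X} = {a. (a, P ! y) \<in> (\<lambda>y. (U y, P ! y)) ` (X - {Max X})}"
        unfolding ARb_def using True y by auto
      have s1: "X - {Max X} \<subseteq> {..<p}" using Xp by auto
      have s2: "y \<in> X - {Max X}" using y yM by simp
      have e2: "{a. (a, P ! y) \<in> (\<lambda>y. (U y, P ! y)) ` (X - {Max X})} = {U y}"
        by (rule in_image_nth[OF s1 s2])
      show ?thesis unfolding e1 e2 by simp
    next
      case False
      have clo: "c \<noteq> P ! lo" using False lo by auto
      have "{a. (a, c) \<in> ARb lo X} = {a. (a, c) \<in> AT}"
      proof (intro set_eqI iffI)
        fix a assume "a \<in> {a. (a, c) \<in> ARb lo X}"
        then show "a \<in> {a. (a, c) \<in> AT}" using False unfolding ARb_def by auto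
      next
        fix a assume "a \<in> {a. (a, c) \<in> AT}"
        then have ac: "(a, c) \<in> AT" by simp
        have cD: "c \<in> desc (P ! lo)" using c by simp
        have "a \<in> desc (P ! lo)" using desc_par[OF cD clo ac] .
        then show "a \<in> {a. (a, c) \<in> ARb lo X}" using ac cD False unfolding ARb_def by simp
      qed
      moreover have "c \<in> V" using c desc_V pV lop by blast
      moreover have "c \<noteq> r"
      proof
        assume "c = r"
        have "(P ! lo, c) \<in> AT\<^sup>*" using c unfolding desc_def by simp
        then obtain a' where "(a', c) \<in> AT" using clo by (cases rule: rtranclE) auto
        then show False using \<open>c = r\<close> noin_r by simp
      qed
      ultimately show ?thesis using indeg by simp
    qed
  qed
  show "\<forall>a c. (a, c) \<in> ARb lo X \<longrightarrow> mu X a < mu X c"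
  proof (intro allI impI)
    fix a c assume "(a, c) \<in> ARb lo X"
    then consider "(a, c) \<in> AT" "c \<notin> (\<lambda>x. P ! x) ` X" | y where "y \<in> X - {Max X}" "a = U y" "c = P ! y"
      unfolding ARb_def by auto
    then show "mu X a < mu X c"
    proof cases
      case 1 then show ?thesis using KA[OF fX] by simp
    next
      case 2
      have yX: "y \<in> X" using 2(1) by simp
      have z: "\<exists>z \<in> X. y < z \<and> z \<le> y + 2" using nxt 2(1) by blast
      have n2: "U y \<notin> W \<or> (\<exists>z \<in> X. y < z \<and> z \<le> y + 2)" using z by blast
      have "mu X (U y) < mu X (P ! y)" by (rule KU[OF fX Xp yX n2])
      then show ?thesis using 2(2,3) by simp
    qed
  qed
qed

lemma beta_leaf: assumes fX: "finite X" and Xs: "X \<subseteq> {lo..<p}" and x: "x \<in> X" "lo < x"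
    and nk: "x \<notin> gg ` {y \<in> X. kp y}"
  shows "P ! (x - 1) \<in> leaves (desc (P ! lo)) (ARb lo X)"
proof -
  have x1: "lo \<le> x - 1" "x < p" using x Xs by auto
  have "(P ! (x - 1), w) \<notin> ARb lo X" for w
  proof
    assume "(P ! (x - 1), w) \<in> ARb lo X"
    then consider "(P ! (x - 1), w) \<in> AT" "w \<notin> (\<lambda>x. P ! x) ` X" | y where "y \<in> X" "P ! (x - 1) = U y"
      unfolding ARb_def by auto
    then show False
    proof cases
      case 1
      have "Suc (x - 1) < p" "Suc (x - 1) = x" using x1 x by auto
      then have "w = P ! x" using pchild[of "x - 1" w] 1(1) by simp
      then show False using 1(2) x by auto
    next
      case 2
      then have "kp y \<and> gg y = x" using no_kill[of y x] Xs x1 x by auto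
      then show False using nk 2 by auto
    qed
  qed
  moreover have "P ! (x - 1) \<in> desc (P ! lo)" using ppath x1 unfolding desc_def by simp
  ultimately show ?thesis unfolding leaves_def by auto
qed


end
context L2 begin
lemma card_good: assumes fin: "finite L" and G: "Good \<subseteq> {1..<p}" and im: "(\<lambda>x. P ! (x - 1)) ` Good \<subseteq> L"
  shows "card Good \<le> card L"
proof -
  have "inj_on (\<lambda>x. P ! (x - 1)) Good"
  proof (rule inj_onI)
    fix x y assume "x \<in> Good" "y \<in> Good" "P ! (x - 1) = P ! (y - 1)"
    moreover have "x \<in> {1..<p}" "y \<in> {1..<p}" using G \<open>x \<in> Good\<close> \<open>y \<in> Good\<close> by blast+
    moreover have "x - 1 < p" "y - 1 < p" "1 \<le> x" "1 \<le> y" using calculation(4,5) by auto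
    ultimately show "x = y" using nth_inj[of "x - 1" "y - 1"] by simp
  qed
  then show ?thesis using card_inj_on_le[OF _ im fin] by blast
qed

lemma beta_result: assumes lop: "lo < p" and UW: "\<forall>y. lo \<le> y \<and> y < p \<longrightarrow> U y \<in> W"
  shows "\<exists>\<rho> VT AR. out_tree V A \<rho> VT AR \<and> p \<le> 3 * card (leaves VT AR \<inter> set P) + lo + 1"
proof -
  have F: "{} \<subseteq> {lo..p - 1}" by simp
  have ex: "\<exists>X. X \<subseteq> {lo..p - 1} \<and> lo \<in> X \<and> {} \<subseteq> X \<and>
    (\<forall>x \<in> {lo..p - 1}. x \<in> X \<longleftrightarrow> (x \<notin> gg ` {y \<in> X. kp y} \<or> (lo < x \<and> x - 1 \<notin> X) \<or> x \<in> {}))"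
    by (rule greedy_exists[OF kg _ F]) (use lop in simp)
  then obtain X where H: "X \<subseteq> {lo..p - 1} \<and> lo \<in> X \<and> {} \<subseteq> X \<and>
    (\<forall>x \<in> {lo..p - 1}. x \<in> X \<longleftrightarrow> (x \<notin> gg ` {y \<in> X. kp y} \<or> (lo < x \<and> x - 1 \<notin> X) \<or> x \<in> {}))"
    by (rule exE)
  have X: "X \<subseteq> {lo..p - 1}" "lo \<in> X" using H by (rule conjunct1, blast)
  have ch: "\<forall>x \<in> {lo..p - 1}. x \<in> X \<longleftrightarrow> (x \<notin> gg ` {y \<in> X. kp y} \<or> (lo < x \<and> x - 1 \<notin> X) \<or> x \<in> {})"
    using H by (elim conjE)
  define G where "G = gg ` {y \<in> X. kp y}"
  have fX: "finite X" using X(1) finite_subset by blast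
  have Xs: "X \<subseteq> {lo..<p}"
  proof
    fix x assume "x \<in> X"
    then have "x \<in> {lo..p - 1}" using X(1) by blast
    then show "x \<in> {lo..<p}" using lop by auto
  qed
  have mX: "Max X \<in> X" using fX X(2) Max_in by blast
  have nxt: "\<forall>y \<in> X - {Max X}. \<exists>z \<in> X. y < z \<and> z \<le> y + 2"
  proof
    fix y assume y: "y \<in> X - {Max X}"
    have yX: "y \<in> X" using y by simp
    have "y \<le> Max X" using Max_ge[OF fX yX] .
    then have "y < Max X" using y by simp
    then show "\<exists>z \<in> X. y < z \<and> z \<le> y + 2" by (rule greedy_next[OF X(1) ch yX mX])
  qed
  have UW': "\<forall>y \<in> X. U y \<in> W"
  proof
    fix y assume "y \<in> X"
    then have "lo \<le> y \<and> y < p" using Xs by auto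
    then show "U y \<in> W" using UW by blast
  qed
  have tree: "out_tree V A (P ! Max X) (desc (P ! lo)) (ARb lo X)"
    by (rule beta_tree[OF fX Xs X(2) UW' nxt])
  define Good where "Good = {x \<in> X. lo < x \<and> x \<notin> G}"
  have im: "(\<lambda>x. P ! (x - 1)) ` Good \<subseteq> leaves (desc (P ! lo)) (ARb lo X) \<inter> set P"
  proof
    fix v assume "v \<in> (\<lambda>x. P ! (x - 1)) ` Good"
    then obtain x where x: "x \<in> X" "lo < x" "x \<notin> G" "v = P ! (x - 1)" unfolding Good_def by auto
    have "x \<notin> gg ` {y \<in> X. kp y}" using x(3) unfolding G_def .
    then have "P ! (x - 1) \<in> leaves (desc (P ! lo)) (ARb lo X)" by (rule beta_leaf[OF fX Xs x(1) x(2)])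
    then have "v \<in> leaves (desc (P ! lo)) (ARb lo X)" using x(4) by simp
    moreover have "x - 1 < p" using x Xs by auto
    ultimately show "v \<in> leaves (desc (P ! lo)) (ARb lo X) \<inter> set P" using x by simp
  qed
  have c1: "card Good \<le> card (leaves (desc (P ! lo)) (ARb lo X) \<inter> set P)"
    by (rule card_good[OF _ _ im]) (use Xs in \<open>auto simp: Good_def\<close>)
  have top: "p - 1 \<le> Max X + 1" using greedy_top[OF X(1) X(2) ch] .
  have e: "\<not> (kp (Max X) \<and> gg (Max X) \<le> p - 1)"
  proof
    assume h: "kp (Max X) \<and> gg (Max X) \<le> p - 1"
    then have "Max X + 3 \<le> gg (Max X)" using kg by blast
    then show False using h top by simp
  qed
  have cnt: "Suc (p - 1) - lo + 2 \<le> 3 * card (X - G) + card ({} :: nat set)"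
    using greedy_count[OF X(1) kg ch refl F mX e] unfolding G_def .
  have loG: "lo \<notin> G"
  proof
    assume "lo \<in> G"
    then obtain y where y: "y \<in> X" "kp y" "lo = gg y" unfolding G_def by blast
    have "lo \<le> y" using y(1) Xs by auto
    have "y + 3 \<le> gg y" using kg y(2) by blast
    then show False using y(3) \<open>lo \<le> y\<close> by simp
  qed
  have "X - G = insert lo Good"
  proof (intro set_eqI iffI)
    fix x assume x: "x \<in> X - G"
    then have "lo \<le> x" using Xs by auto
    then show "x \<in> insert lo Good" using x unfolding Good_def by (cases "x = lo") auto
  next
    fix x assume "x \<in> insert lo Good"
    then show "x \<in> X - G" using X(2) loG unfolding Good_def by blast
  qed
  moreover have "lo \<notin> Good" unfolding Good_def by simp
  moreover have "finite Good" using fX unfolding Good_def by simp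
  ultimately have "card (X - G) = card Good + 1" by simp
  then have "p \<le> 3 * card Good + lo + 1" using cnt lop by simp
  then show ?thesis using tree c1 by (intro exI[of _ "P ! Max X"] exI[of _ "desc (P ! lo)"] exI[of _ "ARb lo X"]) simp
qed

lemma alpha_result: assumes a: "1 \<le> a" "a < p" and Ua: "U a \<notin> W"
  shows "\<exists>\<rho> VT AR. out_tree V A \<rho> VT AR \<and> a + 1 \<le> 3 * card (leaves VT AR \<inter> set P)"
proof -
  have F: "{a} \<subseteq> {1..a}" using a by simp
  have ex: "\<exists>X. X \<subseteq> {1..a} \<and> 1 \<in> X \<and> {a} \<subseteq> X \<and>
    (\<forall>x \<in> {1..a}. x \<in> X \<longleftrightarrow> (x \<notin> gg ` {y \<in> X. kp y} \<or> (1 < x \<and> x - 1 \<notin> X) \<or> x \<in> {a}))"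
    by (rule greedy_exists[OF kg _ F]) (use a in simp)
  then obtain X where H: "X \<subseteq> {1..a} \<and> 1 \<in> X \<and> {a} \<subseteq> X \<and>
    (\<forall>x \<in> {1..a}. x \<in> X \<longleftrightarrow> (x \<notin> gg ` {y \<in> X. kp y} \<or> (1 < x \<and> x - 1 \<notin> X) \<or> x \<in> {a}))"
    by (rule exE)
  have X: "X \<subseteq> {1..a}" "1 \<in> X" "{a} \<subseteq> X" using H by (rule conjunct1, blast, blast)
  have ch: "\<forall>x \<in> {1..a}. x \<in> X \<longleftrightarrow> (x \<notin> gg ` {y \<in> X. kp y} \<or> (1 < x \<and> x - 1 \<notin> X) \<or> x \<in> {a})"
    using H by (elim conjE)
  define G where "G = gg ` {y \<in> X. kp y}"
  have fX: "finite X" using X(1) finite_subset by blast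
  have Xs: "X \<subseteq> {1..<p}"
  proof
    fix x assume "x \<in> X"
    then have "x \<in> {1..a}" using X(1) by blast
    then show "x \<in> {1..<p}" using a by auto
  qed
  have aX: "a \<in> X" using X(3) by simp
  have nxt: "\<forall>y \<in> X. U y \<notin> W \<or> (\<exists>z \<in> X. y < z \<and> z \<le> y + 2)"
  proof
    fix y assume y: "y \<in> X"
    show "U y \<notin> W \<or> (\<exists>z \<in> X. y < z \<and> z \<le> y + 2)"
    proof (cases "y = a")
      case True then show ?thesis using Ua by simp
    next
      case False
      have "y \<in> {1..a}" using y X(1) by blast
      then have "y < a" using False by auto
      then have "\<exists>z \<in> X. y < z \<and> z \<le> y + 2" by (rule greedy_next[OF X(1) ch y aX])
      then show ?thesis by blast
    qed
  qed
  have tree: "out_tree V A r V (ARa X)" by (rule alpha_tree[OF fX Xs nxt])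
  define Good where "Good = X - G"
  have im: "(\<lambda>x. P ! (x - 1)) ` Good \<subseteq> leaves V (ARa X) \<inter> set P"
  proof
    fix v assume "v \<in> (\<lambda>x. P ! (x - 1)) ` Good"
    then obtain x where x: "x \<in> X" "x \<notin> G" "v = P ! (x - 1)" unfolding Good_def by auto
    have "x \<notin> gg ` {y \<in> X. kp y}" using x(2) unfolding G_def .
    then have "P ! (x - 1) \<in> leaves V (ARa X)" by (rule alpha_leaf[OF fX Xs x(1)])
    then have "v \<in> leaves V (ARa X)" using x(3) by simp
    moreover have "x \<in> {1..<p}" using x(1) Xs by blast
    then have "x < p" by simp
    then have "x - 1 < p" using diff_le_self[of x 1] by linarith
    then have "P ! (x - 1) \<in> set P" by (rule nth_mem)
    ultimately show "v \<in> leaves V (ARa X) \<inter> set P" using x by simp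
  qed
  have c1: "card Good \<le> card (leaves V (ARa X) \<inter> set P)"
    by (rule card_good[OF _ _ im]) (use Xs in \<open>auto simp: Good_def\<close>)
  have nkp: "\<not> kp a"
  proof
    assume "kp a"
    then have "U a \<in> set P" unfolding kp_def by simp
    then obtain j where "j < p" "U a = P ! j" by (auto simp: in_set_conv_nth)
    then show False using Ua PW by simp
  qed
  have e: "\<not> (kp a \<and> gg a \<le> a)" using nkp by simp
  have cnt: "Suc a - 1 + 2 \<le> 3 * card (X - G) + card {a}"
    using greedy_count[OF X(1) kg ch refl F aX e] unfolding G_def .
  then have "a + 1 \<le> 3 * card Good" unfolding Good_def by simp
  then show ?thesis using tree c1 by (intro exI[of _ r] exI[of _ V] exI[of _ "ARa X"]) simp
qed

lemma main: assumes p9: "9 \<le> p"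
  shows "\<exists>r' VT' AT'. out_tree V A r' VT' AT' \<and> p \<le> 8 * card (leaves VT' AT' \<inter> set P)"
proof (cases "\<forall>y. y < p \<longrightarrow> U y \<in> W")
  case True
  then obtain \<rho> VT AR where t: "out_tree V A \<rho> VT AR" "p \<le> 3 * card (leaves VT AR \<inter> set P) + 0 + 1"
    using beta_result[of 0] pne by auto
  then show ?thesis using p9 by (intro exI[of _ \<rho>] exI[of _ VT] exI[of _ AR]) simp
next
  case False
  define N where "N = {y. y < p \<and> U y \<notin> W}"
  have fN: "finite N" unfolding N_def by simp
  have nN: "N \<noteq> {}" using False unfolding N_def by auto
  define a where "a = Max N"
  have aN: "a \<in> N" unfolding a_def using fN nN Max_in by blast
  then have ap: "a < p" "U a \<notin> W" unfolding N_def by auto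
  have above: "\<forall>y. a + 1 \<le> y \<and> y < p \<longrightarrow> U y \<in> W"
  proof (intro allI impI)
    fix y assume y: "a + 1 \<le> y \<and> y < p"
    show "U y \<in> W"
    proof (rule ccontr)
      assume "U y \<notin> W"
      then have "y \<in> N" using y unfolding N_def by simp
      then have "y \<le> a" unfolding a_def using Max_ge[OF fN] by simp
      then show False using y by simp
    qed
  qed
  show ?thesis
  proof (cases "a = 0")
    case True
    then obtain \<rho> VT AR where t: "out_tree V A \<rho> VT AR" "p \<le> 3 * card (leaves VT AR \<inter> set P) + (a + 1) + 1"
      using beta_result[of "a + 1"] above p9 by auto
    then show ?thesis using True p9 by (intro exI[of _ \<rho>] exI[of _ VT] exI[of _ AR]) simp
  next
    case a0: False
    obtain \<rho>1 VT1 AR1 where t1: "out_tree V A \<rho>1 VT1 AR1" "a + 1 \<le> 3 * card (leaves VT1 AR1 \<inter> set P)"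
      using alpha_result[of a] a0 ap by auto
    show ?thesis
    proof (cases "a + 1 < p")
      case False
      then show ?thesis using t1 by (intro exI[of _ \<rho>1] exI[of _ VT1] exI[of _ AR1]) simp
    next
      case True
      obtain \<rho>2 VT2 AR2 where t2: "out_tree V A \<rho>2 VT2 AR2" "p \<le> 3 * card (leaves VT2 AR2 \<inter> set P) + (a + 1) + 1"
        using beta_result[of "a + 1"] above True by auto
      show ?thesis
      proof (cases "card (leaves VT2 AR2 \<inter> set P) \<le> card (leaves VT1 AR1 \<inter> set P)")
        case True
        then show ?thesis using t1 t2 p9 by (intro exI[of _ \<rho>1] exI[of _ VT1] exI[of _ AR1]) simp
      next
        case False
        then show ?thesis using t1 t2 p9 by (intro exI[of _ \<rho>2] exI[of _ VT2] exI[of _ AR2]) simp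
      qed
    qed
  qed
qed

end

theorem lemma2:
  fixes V :: "'a set" and A :: "('a \<times> 'a) set" and r :: 'a
    and AT :: "('a \<times> 'a) set" and P :: "'a list"
  assumes D: "digraph V A"
    and T: "out_branching V A r AT"
    and path: "dipath AT P"
    and no_long_arcs: "\<forall>i j. i + 1 < j \<and> j < length P \<longrightarrow> (P ! i, P ! j) \<notin> A"
    and no_branch: "\<forall>v \<in> set P. v \<notin> branch_vertices V AT"
    and in_nbr: "\<forall>i < length P. \<exists>u. (u, P ! i) \<in> A
                    \<and> (i > 0 \<longrightarrow> u \<noteq> P ! (i - 1))
                    \<and> (i + 1 < length P \<longrightarrow> u \<noteq> P ! (i + 1))"
  shows "\<exists>r' VT' AT'. out_tree V A r' VT' AT' \<and>
           length P \<le> 8 * card (leaves VT' AT' \<inter> set P)"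
proof (cases "9 \<le> length P")
  case True
  have L: "L2 V A r AT P" unfolding L2_def using assms True by auto
  show ?thesis by (rule L2.main[OF L True])
next
  case False
  show ?thesis
  proof (cases "P = []")
    case True
    have rV: "r \<in> V" using T unfolding out_branching_def out_tree_def by auto
    have "out_tree V A r {r} {}" unfolding out_tree_def using rV by auto
    then show ?thesis using True by auto
  next
    case ne: False
    then have l0: "0 < length P" by simp
    then obtain u where "(u, P ! 0) \<in> A" using in_nbr by blast
    then have pV: "P ! 0 \<in> V" using D unfolding digraph_def by auto
    have t: "out_tree V A (P ! 0) {P ! 0} {}" unfolding out_tree_def using pV by auto
    have "leaves {P ! 0} {} \<inter> set P = {P ! 0}" unfolding leaves_def using l0 by auto
    then have "card (leaves {P ! 0} {} \<inter> set P) = 1" by simp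
    then show ?thesis using t False by (intro exI[of _ "P ! 0"] exI[of _ "{P ! 0}"] exI[of _ "{}"]) simp
  qed
qed

end
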